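(* Consider downlink two-user NOMA with users $U_1,U_2$ at fixed distances $0<d_1<d_2$ from the base station (BS). Let $X_k=|h_k|^2d_k^{-\alpha}$ be the channel gains, with $\alpha>0$ and $h_1,h_2$ i.i.d. $\mathcal{CN}(0,1)$, independent of the BS's distance estimates $\hat d_1,\hat d_2$ (defined in the context), and let $P_e^1=\Pr\{\hat d_1>\hat d_2\}$. The BS transmits with SNR $\rho>0$, giving power fraction $\beta\in(0,1)$ to the user with the larger estimated distance and $1-\beta$ to the user $N$ with the smaller estimated distance. Let $\epsilon_0=2^{R_0^*}-1>0$ for a target rate $R_0^*>0$ and assume $\beta-(1-\beta)\epsilon_0>0$. Define the common outage probability $$P_{cop}=1-\Pr\left\{\frac{X_1\beta}{X_1(1-\beta)+\frac1\rho}>\epsilon_0,\ \frac{X_2\beta}{X_2(1-\beta)+\frac1\rho}>\epsilon_0,\ \rho(1-\beta)X_N>\epsilon_0\right\},$$ where $X_N$ is the channel gain of user $N$. Then $$P_{cop}=1-(1-P_e^1)e^{-(\lambda_2A+\lambda_1\zeta)}-P_e^1e^{-(\lambda_1A+\lambda_2\zeta)},$$ where $\lambda_k=d_k^\alpha$, $A=\frac{\epsilon_0}{\rho[\beta-(1-\beta)\epsilon_0]}$, $B=\frac{\epsilon_0}{\rho(1-\beta)}$, and $\zeta=\max\{A,B\}$.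
   Context: Position model: user $U_k$ is at fixed position $(x_k,y_k)$ with $d_k=\sqrt{x_k^2+y_k^2}$; the BS's estimates are $\hat x_k\sim\mathcal N(x_k,\sigma_{ob}^2)$, $\hat y_k\sim\mathcal N(y_k,\sigma_{ob}^2)$, all mutually independent, and $\hat d_k=\sqrt{\hat x_k^2+\hat y_k^2}$. The non-outage event encodes SIC decoding: both users must decode the estimated-far user's signal (power fraction $\beta$) treating the other as noise, and the estimated-near user must then decode its own signal after cancellation. *)

theory Defs
  imports "HOL-Probability.Probability"
begin

definition true_dist :: "(nat \<Rightarrow> real) \<Rightarrow> (nat \<Rightarrow> real) \<Rightarrow> nat \<Rightarrow> real" where
  "true_dist x y k = sqrt ((x k)\<^sup>2 + (y k)\<^sup>2)"

definition est_dist :: "(nat \<Rightarrow> 'a \<Rightarrow> real) \<Rightarrow> (nat \<Rightarrow> 'a \<Rightarrow> real) \<Rightarrow> nat \<Rightarrow> 'a \<Rightarrow> real" where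
  "est_dist xh yh k \<omega> = sqrt ((xh k \<omega>)\<^sup>2 + (yh k \<omega>)\<^sup>2)"

definition gain :: "('a \<Rightarrow> complex) \<Rightarrow> real \<Rightarrow> real \<Rightarrow> 'a \<Rightarrow> real" where
  "gain hk dk \<alpha> \<omega> = (cmod (hk \<omega>))\<^sup>2 * dk powr (-\<alpha>)"

definition all_vars :: "(nat \<Rightarrow> 'a \<Rightarrow> complex) \<Rightarrow> (nat \<Rightarrow> 'a \<Rightarrow> real) \<Rightarrow> (nat \<Rightarrow> 'a \<Rightarrow> real)
    \<Rightarrow> nat \<times> nat \<Rightarrow> 'a \<Rightarrow> real" where
  "all_vars h xh yh jk = (case jk of (j, k) \<Rightarrow>
     (if j = 0 then (\<lambda>\<omega>. Re (h k \<omega>)) else if j = 1 then (\<lambda>\<omega>. Im (h k \<omega>))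
      else if j = 2 then xh k else yh k))"

end

theory Submission
  imports Defs
begin

lemma nn_integral_even:
  fixes g :: "real \<Rightarrow> ennreal"
  assumes [measurable]: "g \<in> borel_measurable borel" and ev: "\<And>x. g (-x) = g x"
  shows "(\<integral>\<^sup>+x. g x \<partial>lborel) = 2 * (\<integral>\<^sup>+x. g x * indicator {0..} x \<partial>lborel)"
proof -
  have "(\<integral>\<^sup>+x. g x \<partial>lborel) = (\<integral>\<^sup>+x. g x * indicator {0..} x + g x * indicator {..<0} x \<partial>lborel)"
    by (intro nn_integral_cong) (auto split: split_indicator)
  also have "\<dots> = (\<integral>\<^sup>+x. g x * indicator {0..} x \<partial>lborel) + (\<integral>\<^sup>+x. g x * indicator {..<0} x \<partial>lborel)"
    by (intro nn_integral_add) auto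
  also have "(\<integral>\<^sup>+x. g x * indicator {..<0} x \<partial>lborel) = ennreal \<bar>-1::real\<bar> * (\<integral>\<^sup>+x. g (0 + (-1) * x) * indicator {..<0} (0 + (-1) * x) \<partial>lborel)"
    by (rule nn_integral_real_affine) auto
  also have "\<dots> = (\<integral>\<^sup>+x. g x * indicator {0<..} x \<partial>lborel)"
    using ev by (auto intro!: nn_integral_cong split: split_indicator)
  also have "\<dots> = (\<integral>\<^sup>+x. g x * indicator {0..} x \<partial>lborel)"
    by (intro nn_integral_cong_AE eventually_mono[OF AE_lborel_singleton[of 0]]) (auto split: split_indicator)
  finally show ?thesis by (simp add: mult_2)
qed

lemma inner_int:
  fixes c t :: real
  assumes c: "c > 0" and t: "t \<ge> 0"
  shows "(\<integral>\<^sup>+x. ennreal (if t < c * x\<^sup>2 then \<bar>x\<bar> * exp (- (c * x\<^sup>2)) else 0) \<partial>lborel) = ennreal (exp (-t) / c)"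
proof -
  define a where "a = sqrt (t / c)"
  have a0: "a \<ge> 0" using c t by (simp add: a_def)
  have ca: "c * a\<^sup>2 = t" using c t by (simp add: a_def)
  have key: "\<And>x. x \<ge> 0 \<Longrightarrow> (t < c * x\<^sup>2) \<longleftrightarrow> a < x"
  proof -
    fix x :: real assume x: "x \<ge> 0"
    have "(t < c * x\<^sup>2) \<longleftrightarrow> c * a\<^sup>2 < c * x\<^sup>2" using ca by simp
    also have "\<dots> \<longleftrightarrow> a\<^sup>2 < x\<^sup>2" using c by simp
    also have "\<dots> \<longleftrightarrow> a < x" using a0 x by (meson power_less_imp_less_base power_strict_mono zero_less_numeral)
    finally show "(t < c * x\<^sup>2) \<longleftrightarrow> a < x" .
  qed
  have "(\<integral>\<^sup>+x. ennreal (if t < c * x\<^sup>2 then \<bar>x\<bar> * exp (- (c * x\<^sup>2)) else 0) \<partial>lborel)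
      = 2 * (\<integral>\<^sup>+x. ennreal (if t < c * x\<^sup>2 then \<bar>x\<bar> * exp (- (c * x\<^sup>2)) else 0) * indicator {0..} x \<partial>lborel)"
    by (rule nn_integral_even) (measurable; simp)+
  also have "(\<integral>\<^sup>+x. ennreal (if t < c * x\<^sup>2 then \<bar>x\<bar> * exp (- (c * x\<^sup>2)) else 0) * indicator {0..} x \<partial>lborel)
      = (\<integral>\<^sup>+x. ennreal (x * exp (- (c * x\<^sup>2))) * indicator {a..} x \<partial>lborel)"
    apply (intro nn_integral_cong_AE eventually_mono[OF AE_lborel_singleton[of a]])
    using key a0 by (auto split: split_indicator)
  also have "\<dots> = ennreal (0 - (- exp (- (c * a\<^sup>2)) / (2 * c)))"
  proof (rule nn_integral_FTC_atLeast)
    have "((\<lambda>x::real. - exp (- (c * x\<^sup>2)) / (2 * c)) \<longlongrightarrow> - 0 / (2 * c)) at_top"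
      by (intro tendsto_divide tendsto_minus filterlim_compose[OF exp_at_bot]
                   filterlim_compose[OF filterlim_uminus_at_bot_at_top]
                   filterlim_tendsto_pos_mult_at_top[OF tendsto_const c]
                   filterlim_pow_at_top filterlim_ident)
         (use c in auto)
    then show "((\<lambda>x::real. - exp (- (c * x\<^sup>2)) / (2 * c)) \<longlongrightarrow> 0) at_top"
      by simp
    fix x :: real assume "a \<le> x"
    then show "0 \<le> x * exp (- (c * x\<^sup>2))" using a0 by simp
    show "((\<lambda>x::real. - exp (- (c * x\<^sup>2)) / (2 * c)) has_real_derivative x * exp (- (c * x\<^sup>2))) (at x)"
      using c by (auto intro!: derivative_eq_intros simp: field_simps)
  qed auto
  also have "ennreal (0 - (- exp (- (c * a\<^sup>2)) / (2 * c))) = ennreal (exp (-t) / (2 * c))"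
    using ca by simp
  also have "2 * ennreal (exp (-t) / (2 * c)) = ennreal 2 * ennreal (exp (-t) / (2 * c))" by simp
  also have "\<dots> = ennreal (2 * (exp (-t) / (2 * c)))" by (intro ennreal_mult[symmetric]) (use c in auto)
  also have "2 * (exp (-t) / (2 * c)) = exp (-t) / c" using c by simp
  finally show ?thesis .
qed

lemma plane_int:
  fixes t :: real assumes t: "t \<ge> 0"
  shows "(\<integral>\<^sup>+x. \<integral>\<^sup>+y. ennreal (if t < x\<^sup>2 + y\<^sup>2 then exp (- (x\<^sup>2 + y\<^sup>2)) else 0) \<partial>lborel \<partial>lborel)
         = ennreal (pi * exp (-t))"
proof -
  define G where "G x s = ennreal (if t < (1 + s\<^sup>2) * x\<^sup>2 then \<bar>x\<bar> * exp (- ((1 + s\<^sup>2) * x\<^sup>2)) else 0)" for x s :: real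
  have "(\<integral>\<^sup>+x. \<integral>\<^sup>+y. ennreal (if t < x\<^sup>2 + y\<^sup>2 then exp (- (x\<^sup>2 + y\<^sup>2)) else 0) \<partial>lborel \<partial>lborel)
      = (\<integral>\<^sup>+x. \<integral>\<^sup>+s. G x s \<partial>lborel \<partial>lborel)"
  proof -
   have inner: "(\<integral>\<^sup>+y. ennreal (if t < x\<^sup>2 + y\<^sup>2 then exp (- (x\<^sup>2 + y\<^sup>2)) else 0) \<partial>lborel) = (\<integral>\<^sup>+s. G x s \<partial>lborel)"
     if x: "x \<noteq> 0" for x :: real
   proof -
    have "(\<integral>\<^sup>+y. ennreal (if t < x\<^sup>2 + y\<^sup>2 then exp (- (x\<^sup>2 + y\<^sup>2)) else 0) \<partial>lborel)
       = ennreal \<bar>x\<bar> * (\<integral>\<^sup>+s. ennreal (if t < x\<^sup>2 + (0 + x * s)\<^sup>2 then exp (- (x\<^sup>2 + (0 + x * s)\<^sup>2)) else 0) \<partial>lborel)"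
      by (rule nn_integral_real_affine) (use x in auto)
    also have "\<dots> = (\<integral>\<^sup>+s. ennreal \<bar>x\<bar> * ennreal (if t < x\<^sup>2 + (0 + x * s)\<^sup>2 then exp (- (x\<^sup>2 + (0 + x * s)\<^sup>2)) else 0) \<partial>lborel)"
      by (rule nn_integral_cmult[symmetric]) measurable
    also have "\<dots> = (\<integral>\<^sup>+s. G x s \<partial>lborel)"
    proof (intro nn_integral_cong)
      fix s :: real
      have e: "x\<^sup>2 + (0 + x * s)\<^sup>2 = (1 + s\<^sup>2) * x\<^sup>2" by (simp add: algebra_simps power_mult_distrib)
      show "ennreal \<bar>x\<bar> * ennreal (if t < x\<^sup>2 + (0 + x * s)\<^sup>2 then exp (- (x\<^sup>2 + (0 + x * s)\<^sup>2)) else 0) = G x s"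
        unfolding e G_def by (simp add: ennreal_mult[symmetric])
    qed
    finally show ?thesis .
   qed
   show ?thesis
     by (intro nn_integral_cong_AE eventually_mono[OF AE_lborel_singleton[of 0]] inner)
  qed
  also have "\<dots> = (\<integral>\<^sup>+s. \<integral>\<^sup>+x. G x s \<partial>lborel \<partial>lborel)"
    by (rule lborel_pair.Fubini'[symmetric]) (unfold G_def, measurable)
  also have "\<dots> = (\<integral>\<^sup>+s. ennreal (exp (-t) / (1 + s\<^sup>2)) \<partial>lborel)"
  proof (intro nn_integral_cong)
    fix s :: real
    have "(1 + s\<^sup>2) > 0" by (simp add: add_pos_nonneg)
    then show "(\<integral>\<^sup>+x. G x s \<partial>lborel) = ennreal (exp (-t) / (1 + s\<^sup>2))"
      unfolding G_def using inner_int[of "1 + s\<^sup>2" t] t by simp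
  qed
  also have "\<dots> = 2 * (\<integral>\<^sup>+s. ennreal (exp (-t) / (1 + s\<^sup>2)) * indicator {0..} s \<partial>lborel)"
    by (rule nn_integral_even) (measurable; simp)+
  also have "(\<integral>\<^sup>+s. ennreal (exp (-t) / (1 + s\<^sup>2)) * indicator {0..} s \<partial>lborel)
     = ennreal (exp (-t) * (pi / 2) - exp (-t) * arctan 0)"
  proof (rule nn_integral_FTC_atLeast)
    show "((\<lambda>s. exp (-t) * arctan s) \<longlongrightarrow> exp (-t) * (pi / 2)) at_top"
      by (intro tendsto_intros) (simp_all add: tendsto_arctan_at_top)
    fix x :: real
    show "((\<lambda>s. exp (-t) * arctan s) has_real_derivative exp (-t) / (1 + x\<^sup>2)) (at x)"
      by (auto intro!: derivative_eq_intros simp: add_nonneg_eq_0_iff field_simps power2_eq_square)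
    show "0 \<le> exp (-t) / (1 + x\<^sup>2)" by simp
  qed measurable
  also have "2 * ennreal (exp (-t) * (pi / 2) - exp (-t) * arctan 0) = ennreal 2 * ennreal (exp (-t) * (pi / 2))" by simp
  also have "\<dots> = ennreal (2 * (exp (-t) * (pi / 2)))" by (intro ennreal_mult[symmetric]) auto
  also have "2 * (exp (-t) * (pi / 2)) = pi * exp (-t)" by simp
  finally show ?thesis .
qed


lemma nd_half: "normal_density 0 (sqrt (1/2)) x = exp (- x\<^sup>2) / sqrt pi"
  by (simp add: normal_density_def power2_eq_square[symmetric])

lemma (in prob_space) exp_tail:
  assumes X: "distributed M lborel X (normal_density 0 (sqrt (1/2)))"
    and Y: "distributed M lborel Y (normal_density 0 (sqrt (1/2)))"
    and ind: "indep_var borel X borel Y"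
    and t: "t \<ge> 0"
  shows "prob {\<omega> \<in> space M. t < (X \<omega>)\<^sup>2 + (Y \<omega>)\<^sup>2} = exp (-t)"
proof -
  have ind': "indep_var lborel (id \<circ> X) lborel (id \<circ> Y)"
    by (rule indep_var_compose[OF ind]) auto
  have J: "distributed M (lborel \<Otimes>\<^sub>M lborel) (\<lambda>x. (X x, Y x))
      (\<lambda>(x, y). ennreal (normal_density 0 (sqrt (1/2)) x) * ennreal (normal_density 0 (sqrt (1/2)) y))"
    by (rule distributed_joint_indep[OF lborel.sigma_finite_measure_axioms lborel.sigma_finite_measure_axioms X Y])
       (use ind' in simp)
  define A where "A = {p :: real \<times> real. t < (fst p)\<^sup>2 + (snd p)\<^sup>2}"
  have A[measurable]: "A \<in> sets (lborel \<Otimes>\<^sub>M lborel)" 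
  proof -
    have "{p \<in> space (lborel \<Otimes>\<^sub>M lborel). t < (fst p)\<^sup>2 + (snd p)\<^sup>2} \<in> sets (lborel \<Otimes>\<^sub>M lborel)"
      by measurable
    then show ?thesis unfolding A_def by (simp add: space_pair_measure)
  qed
  have "emeasure M ((\<lambda>x. (X x, Y x)) -` A \<inter> space M)
     = (\<integral>\<^sup>+p. (\<lambda>(x, y). ennreal (normal_density 0 (sqrt (1/2)) x) * ennreal (normal_density 0 (sqrt (1/2)) y)) p * indicator A p \<partial>(lborel \<Otimes>\<^sub>M lborel))"
    by (rule distributed_emeasure[OF J A])
  also have "\<dots> = (\<integral>\<^sup>+x. \<integral>\<^sup>+y. (\<lambda>(x, y). ennreal (normal_density 0 (sqrt (1/2)) x) * ennreal (normal_density 0 (sqrt (1/2)) y)) (x, y) * indicator A (x, y) \<partial>lborel \<partial>lborel)"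
    by (rule lborel.nn_integral_fst[symmetric]) measurable
  also have "\<dots> = (\<integral>\<^sup>+x. \<integral>\<^sup>+y. ennreal (1 / pi) * ennreal (if t < x\<^sup>2 + y\<^sup>2 then exp (- (x\<^sup>2 + y\<^sup>2)) else 0) \<partial>lborel \<partial>lborel)"
  proof (intro nn_integral_cong)
    fix x y :: real
    have "exp (- x\<^sup>2) / sqrt pi * (exp (- y\<^sup>2) / sqrt pi) = 1 / pi * exp (- (x\<^sup>2 + y\<^sup>2))"
      by (simp add: exp_add[symmetric] field_simps)
    then show "(\<lambda>(x, y). ennreal (normal_density 0 (sqrt (1/2)) x) * ennreal (normal_density 0 (sqrt (1/2)) y)) (x, y) * indicator A (x, y)
      = ennreal (1 / pi) * ennreal (if t < x\<^sup>2 + y\<^sup>2 then exp (- (x\<^sup>2 + y\<^sup>2)) else 0)"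
      unfolding nd_half A_def by (simp add: ennreal_mult[symmetric] split: split_indicator)
  qed
  also have "\<dots> = ennreal (1 / pi) * (\<integral>\<^sup>+x. \<integral>\<^sup>+y. ennreal (if t < x\<^sup>2 + y\<^sup>2 then exp (- (x\<^sup>2 + y\<^sup>2)) else 0) \<partial>lborel \<partial>lborel)"
    by (simp add: nn_integral_cmult)
  also have "\<dots> = ennreal (1 / pi) * ennreal (pi * exp (-t))" using plane_int[OF t] by simp
  also have "\<dots> = ennreal (exp (-t))" by (simp add: ennreal_mult[symmetric])
  finally have "emeasure M ((\<lambda>x. (X x, Y x)) -` A \<inter> space M) = ennreal (exp (-t))" .
  moreover have "(\<lambda>x. (X x, Y x)) -` A \<inter> space M = {\<omega> \<in> space M. t < (X \<omega>)\<^sup>2 + (Y \<omega>)\<^sup>2}"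
    unfolding A_def by auto
  ultimately show ?thesis by (simp add: emeasure_eq_measure)
qed


lemma frac_iff:
  fixes X \<beta> \<rho> \<epsilon> :: real
  assumes X: "X \<ge> 0" and b: "0 < \<beta>" "\<beta> < 1" and r: "\<rho> > 0" and f: "\<beta> - (1 - \<beta>) * \<epsilon> > 0"
  shows "(X * \<beta> / (X * (1 - \<beta>) + 1 / \<rho>) > \<epsilon>) \<longleftrightarrow> X > \<epsilon> / (\<rho> * (\<beta> - (1 - \<beta>) * \<epsilon>))"
proof -
  have D: "X * (1 - \<beta>) + 1 / \<rho> > 0" using X b r by (simp add: add_nonneg_pos)
  have e1: "(X * \<beta> / (X * (1 - \<beta>) + 1 / \<rho>) > \<epsilon>) \<longleftrightarrow> \<epsilon> * (X * (1 - \<beta>) + 1 / \<rho>) < X * \<beta>"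
    using D by (simp add: pos_less_divide_eq)
  have q: "X * \<beta> - \<epsilon> * (X * (1 - \<beta>) + 1 / \<rho>) = X * (\<beta> - (1 - \<beta>) * \<epsilon>) - \<epsilon> / \<rho>"
    by (simp add: algebra_simps)
  have e2: "\<epsilon> * (X * (1 - \<beta>) + 1 / \<rho>) < X * \<beta> \<longleftrightarrow> \<epsilon> / \<rho> < X * (\<beta> - (1 - \<beta>) * \<epsilon>)"
    using q by linarith
  have e3: "\<epsilon> / \<rho> < X * (\<beta> - (1 - \<beta>) * \<epsilon>) \<longleftrightarrow> \<epsilon> / \<rho> / (\<beta> - (1 - \<beta>) * \<epsilon>) < X"
    by (rule pos_divide_less_eq[OF f, symmetric])
  have e4: "\<epsilon> / \<rho> / (\<beta> - (1 - \<beta>) * \<epsilon>) = \<epsilon> / (\<rho> * (\<beta> - (1 - \<beta>) * \<epsilon>))" by simp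
  show ?thesis using e1 e2 e3 e4 by simp
qed

theorem proposition2:
  fixes M :: "'a measure"
    and h :: "nat \<Rightarrow> 'a \<Rightarrow> complex"
    and xh yh :: "nat \<Rightarrow> 'a \<Rightarrow> real"
    and x y :: "nat \<Rightarrow> real"
    and \<sigma> \<alpha> \<rho> \<beta> R0 :: real
  assumes M: "prob_space M"
    and h_re: "\<And>k. k \<in> {1, 2} \<Longrightarrow>
                 distributed M lborel (\<lambda>\<omega>. Re (h k \<omega>)) (normal_density 0 (sqrt (1/2)))"
    and h_im: "\<And>k. k \<in> {1, 2} \<Longrightarrow>
                 distributed M lborel (\<lambda>\<omega>. Im (h k \<omega>)) (normal_density 0 (sqrt (1/2)))"
    and xh_distr: "\<And>k. k \<in> {1, 2} \<Longrightarrow> distributed M lborel (xh k) (normal_density (x k) \<sigma>)"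
    and yh_distr: "\<And>k. k \<in> {1, 2} \<Longrightarrow> distributed M lborel (yh k) (normal_density (y k) \<sigma>)"
    and indep: "prob_space.indep_vars M (\<lambda>_. borel) (all_vars h xh yh) ({0..3} \<times> {1, 2})"
    and \<sigma>_pos: "\<sigma> > 0"
    and d_order: "0 < true_dist x y 1" "true_dist x y 1 < true_dist x y 2"
    and \<alpha>_pos: "\<alpha> > 0"
    and \<rho>_pos: "\<rho> > 0"
    and \<beta>_range: "0 < \<beta>" "\<beta> < 1"
    and R0_pos: "R0 > 0"
    and feasible: "\<beta> - (1 - \<beta>) * (2 powr R0 - 1) > 0"
  shows
    "let \<epsilon>0 = 2 powr R0 - 1;
         d1 = true_dist x y 1; d2 = true_dist x y 2;
         X1 = gain (h 1) d1 \<alpha>; X2 = gain (h 2) d2 \<alpha>;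
         dh1 = est_dist xh yh 1; dh2 = est_dist xh yh 2;
         XN = (\<lambda>\<omega>. if dh1 \<omega> > dh2 \<omega> then X2 \<omega> else X1 \<omega>);
         Pe = measure M {\<omega> \<in> space M. dh1 \<omega> > dh2 \<omega>};
         Pcop = 1 - measure M {\<omega> \<in> space M.
                   X1 \<omega> * \<beta> / (X1 \<omega> * (1 - \<beta>) + 1 / \<rho>) > \<epsilon>0 \<and>
                   X2 \<omega> * \<beta> / (X2 \<omega> * (1 - \<beta>) + 1 / \<rho>) > \<epsilon>0 \<and>
                   \<rho> * (1 - \<beta>) * XN \<omega> > \<epsilon>0};
         lam1 = d1 powr \<alpha>; lam2 = d2 powr \<alpha>;
         A = \<epsilon>0 / (\<rho> * (\<beta> - (1 - \<beta>) * \<epsilon>0));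
         B = \<epsilon>0 / (\<rho> * (1 - \<beta>));
         \<zeta> = max A B
     in Pcop = 1 - (1 - Pe) * exp (-(lam2 * A + lam1 * \<zeta>)) - Pe * exp (-(lam1 * A + lam2 * \<zeta>))"
  proof -
  interpret P: prob_space M by (rule M)
  define \<epsilon>0 where "\<epsilon>0 = 2 powr R0 - 1"
  define d1 where "d1 = true_dist x y 1"
  define d2 where "d2 = true_dist x y 2"
  define lam1 where "lam1 = d1 powr \<alpha>"
  define lam2 where "lam2 = d2 powr \<alpha>"
  define A where "A = \<epsilon>0 / (\<rho> * (\<beta> - (1 - \<beta>) * \<epsilon>0))"
  define B where "B = \<epsilon>0 / (\<rho> * (1 - \<beta>))"
  define \<zeta> where "\<zeta> = max A B"
  define H where "H k \<omega> = (Re (h k \<omega>))\<^sup>2 + (Im (h k \<omega>))\<^sup>2" for k \<omega>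
  define Ev where "Ev \<omega> = (est_dist xh yh 1 \<omega> > est_dist xh yh 2 \<omega>)" for \<omega>
  define Pe where "Pe = measure M {\<omega> \<in> space M. Ev \<omega>}"
  have eps_pos: "\<epsilon>0 > 0" unfolding \<epsilon>0_def using gr_one_powr[of 2 R0] R0_pos by simp
  have feas: "\<beta> - (1 - \<beta>) * \<epsilon>0 > 0" using feasible by (simp add: \<epsilon>0_def)
  have d1_pos: "d1 > 0" and d2_pos: "d2 > 0" using d_order by (auto simp: d1_def d2_def)
  have lam1_pos: "lam1 > 0" and lam2_pos: "lam2 > 0" using d1_pos d2_pos by (auto simp: lam1_def lam2_def)
  have A_pos: "A > 0" unfolding A_def using eps_pos feas \<rho>_pos by simp
  have B_pos: "B > 0" unfolding B_def using eps_pos \<beta>_range \<rho>_pos by simp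
  have zeta_pos: "\<zeta> > 0" unfolding \<zeta>_def using A_pos by simp

  have gain_gt: "(gain (h k) d \<alpha> \<omega> > c) \<longleftrightarrow> (H k \<omega> > c * d powr \<alpha>)" if d: "d > 0" for k d c \<omega>
  proof -
    have "gain (h k) d \<alpha> \<omega> = H k \<omega> / d powr \<alpha>"
      unfolding gain_def H_def by (simp add: cmod_power2 powr_minus_divide)
    moreover have "d powr \<alpha> > 0" using d by simp
    ultimately show ?thesis by (simp add: pos_less_divide_eq)
  qed
  have gain_nonneg: "gain (h k) d \<alpha> \<omega> \<ge> 0" for k d \<omega>
    unfolding gain_def by simp

  have fN: "(\<rho> * (1 - \<beta>) * X > \<epsilon>0) \<longleftrightarrow> X > B" for X
  proof -
    have "B < X \<longleftrightarrow> \<epsilon>0 < X * (\<rho> * (1 - \<beta>))"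
      unfolding B_def by (rule pos_divide_less_eq) (use \<rho>_pos \<beta>_range in simp)
    then show ?thesis by (simp add: mult.commute)
  qed

  have cond_iff:
    "(gain (h 1) d1 \<alpha> \<omega> * \<beta> / (gain (h 1) d1 \<alpha> \<omega> * (1 - \<beta>) + 1 / \<rho>) > \<epsilon>0 \<and>
      gain (h 2) d2 \<alpha> \<omega> * \<beta> / (gain (h 2) d2 \<alpha> \<omega> * (1 - \<beta>) + 1 / \<rho>) > \<epsilon>0 \<and>
      \<rho> * (1 - \<beta>) * (if Ev \<omega> then gain (h 2) d2 \<alpha> \<omega> else gain (h 1) d1 \<alpha> \<omega>) > \<epsilon>0)
     \<longleftrightarrow> (Ev \<omega> \<and> A * lam1 < H 1 \<omega> \<and> \<zeta> * lam2 < H 2 \<omega>) \<or> (\<not> Ev \<omega> \<and> \<zeta> * lam1 < H 1 \<omega> \<and> A * lam2 < H 2 \<omega>)"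
    for \<omega>
  proof -
    have f1: "(gain (h 1) d1 \<alpha> \<omega> * \<beta> / (gain (h 1) d1 \<alpha> \<omega> * (1 - \<beta>) + 1 / \<rho>) > \<epsilon>0) \<longleftrightarrow> gain (h 1) d1 \<alpha> \<omega> > A"
      unfolding A_def by (rule frac_iff[OF gain_nonneg \<beta>_range \<rho>_pos feas])
    have f2: "(gain (h 2) d2 \<alpha> \<omega> * \<beta> / (gain (h 2) d2 \<alpha> \<omega> * (1 - \<beta>) + 1 / \<rho>) > \<epsilon>0) \<longleftrightarrow> gain (h 2) d2 \<alpha> \<omega> > A"
      unfolding A_def by (rule frac_iff[OF gain_nonneg \<beta>_range \<rho>_pos feas])
    have mx: "(max A B * p < v) \<longleftrightarrow> (A * p < v \<and> B * p < v)" if p: "p > 0" for p v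
    proof (cases "A \<le> B")
      case True
      then have "A * p \<le> B * p" using p by (simp add: mult_right_mono)
      then show ?thesis using True by (auto simp: max_def)
    next
      case False
      then have "B * p \<le> A * p" using p by (simp add: mult_right_mono)
      then show ?thesis using False by (auto simp: max_def)
    qed
    have l1: "d1 powr \<alpha> = lam1" and l2: "d2 powr \<alpha> = lam2" by (simp_all add: lam1_def lam2_def)
    show ?thesis
      unfolding f1 f2 fN \<zeta>_def
      by (cases "Ev \<omega>") (auto simp: gain_gt[OF d1_pos] gain_gt[OF d2_pos] l1 l2 mx[OF lam1_pos] mx[OF lam2_pos])
  qed

  have tails: "P.prob {\<omega> \<in> space M. t < H k \<omega>} = exp (- t)" if k: "k \<in> {1, 2}" and t: "t \<ge> 0" for k t
  proof -
    have "P.indep_var borel ((\<lambda>f. f (0, k)) \<circ> (\<lambda>\<omega>. restrict (\<lambda>i. all_vars h xh yh i \<omega>) {(0, k)}))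
        borel ((\<lambda>f. f (1, k)) \<circ> (\<lambda>\<omega>. restrict (\<lambda>i. all_vars h xh yh i \<omega>) {(1, k)}))"
      by (intro P.indep_var_compose[OF P.indep_var_restrict[OF indep]] measurable_component_singleton)
         (use k in auto)
    also have "((\<lambda>f. f (0, k)) \<circ> (\<lambda>\<omega>. restrict (\<lambda>i. all_vars h xh yh i \<omega>) {(0, k)})) = (\<lambda>\<omega>. Re (h k \<omega>))"
      by (simp add: fun_eq_iff all_vars_def)
    also have "((\<lambda>f. f (1, k)) \<circ> (\<lambda>\<omega>. restrict (\<lambda>i. all_vars h xh yh i \<omega>) {(1, k)})) = (\<lambda>\<omega>. Im (h k \<omega>))"
      by (simp add: fun_eq_iff all_vars_def)
    finally have ind: "P.indep_var borel (\<lambda>\<omega>. Re (h k \<omega>)) borel (\<lambda>\<omega>. Im (h k \<omega>))" .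
    show ?thesis unfolding H_def
      by (rule P.exp_tail[OF h_re[OF k] h_im[OF k] ind t])
  qed

  define L where "L = {0, 1, 2 :: nat}"
  define K where "K j = (if j = (0::nat) then {(2::nat, 1::nat), (3, 1), (2, 2), (3, 2)} else {(0, j), (1, j)})" for j
  have KI: "K j \<subseteq> {0..3} \<times> {1, 2}" if "j \<in> L" for j using that by (auto simp: K_def L_def)
  have disj: "disjoint_family_on K L" by (auto simp: disjoint_family_on_def K_def L_def)
  have R: "P.indep_vars (\<lambda>j. PiM (K j) (\<lambda>_. borel)) (\<lambda>j \<omega>. restrict (\<lambda>i. all_vars h xh yh i \<omega>) (K j)) L"
    by (rule P.indep_vars_restrict[OF indep KI disj])
  define Yf :: "nat \<Rightarrow> (nat \<times> nat \<Rightarrow> real) \<Rightarrow> real" where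
    "Yf j f = (if j = 0 then (if sqrt ((f (2,1))\<^sup>2 + (f (3,1))\<^sup>2) > sqrt ((f (2,2))\<^sup>2 + (f (3,2))\<^sup>2) then 1 else 0)
               else (f (0,j))\<^sup>2 + (f (1,j))\<^sup>2)" for j f
  have Ym: "Yf j \<in> borel_measurable (PiM (K j) (\<lambda>_. borel))" if "j \<in> L" for j
  proof (cases "j = 0")
    case True
    have "(\<lambda>f. if sqrt ((f (2,1))\<^sup>2 + (f (3,1))\<^sup>2) > sqrt ((f (2,2))\<^sup>2 + (f (3,2))\<^sup>2) then 1 else (0::real))
       \<in> borel_measurable (PiM {(2::nat, 1::nat), (3, 1), (2, 2), (3, 2)} (\<lambda>_. borel))"
      by measurable
    then show ?thesis using True by (simp add: Yf_def[abs_def] K_def)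
  next
    case False
    have "(\<lambda>f. (f (0,j))\<^sup>2 + (f (1,j))\<^sup>2 :: real) \<in> borel_measurable (PiM {(0, j), (1, j)} (\<lambda>_. borel))"
      by measurable
    then show ?thesis using False by (simp add: Yf_def[abs_def] K_def)
  qed
  have Z0: "P.indep_vars (\<lambda>_. borel) (\<lambda>j \<omega>. Yf j (restrict (\<lambda>i. all_vars h xh yh i \<omega>) (K j))) L"
    by (rule P.indep_vars_compose2[OF R Ym])
  define Z where "Z j \<omega> = (if j = 0 then (if Ev \<omega> then 1 else 0) else H j \<omega>)" for j \<omega>
  have Zeq: "(\<lambda>\<omega>. Yf j (restrict (\<lambda>i. all_vars h xh yh i \<omega>) (K j))) = Z j" if "j \<in> L" for j
    using that by (auto simp: fun_eq_iff L_def Yf_def K_def Z_def all_vars_def H_def Ev_def est_dist_def)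
  have ZI: "P.indep_vars (\<lambda>_. borel) Z L"
  proof -
    have "P.indep_vars (\<lambda>_. borel) (\<lambda>j \<omega>. Yf j (restrict (\<lambda>i. all_vars h xh yh i \<omega>) (K j))) L
       \<longleftrightarrow> P.indep_vars (\<lambda>_. borel) Z L"
      by (rule P.indep_vars_cong) (auto simp: Zeq)
    with Z0 show ?thesis by simp
  qed
  have Zm[measurable]: "Z j \<in> borel_measurable M" if "j \<in> L" for j
    using ZI that by (auto simp: P.indep_vars_def)
  have Z0m[measurable]: "Z 0 \<in> borel_measurable M" and Z1m[measurable]: "Z 1 \<in> borel_measurable M"
    and Z2m[measurable]: "Z 2 \<in> borel_measurable M" by (auto intro: Zm simp: L_def)

  have prod3: "P.prob ({\<omega> \<in> space M. Z 0 \<omega> = e} \<inter> {\<omega> \<in> space M. c1 < Z 1 \<omega>} \<inter> {\<omega> \<in> space M. c2 < Z 2 \<omega>})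
      = P.prob {\<omega> \<in> space M. Z 0 \<omega> = e} * P.prob {\<omega> \<in> space M. c1 < Z 1 \<omega>} * P.prob {\<omega> \<in> space M. c2 < Z 2 \<omega>}"
    for e c1 c2 :: real
  proof -
    define S where "S j = (if j = (0::nat) then {e} else if j = 1 then {c1<..} else {c2<..})" for j
    have "P.prob (\<Inter>j\<in>L. Z j -` S j \<inter> space M) = (\<Prod>j\<in>L. P.prob (Z j -` S j \<inter> space M))"
      by (rule P.indep_varsD[OF ZI]) (auto simp: L_def S_def)
    moreover have "(\<Inter>j\<in>L. Z j -` S j \<inter> space M) =
       {\<omega> \<in> space M. Z 0 \<omega> = e} \<inter> {\<omega> \<in> space M. c1 < Z 1 \<omega>} \<inter> {\<omega> \<in> space M. c2 < Z 2 \<omega>}"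
      by (auto simp: L_def S_def)
    moreover have "(\<Prod>j\<in>L. P.prob (Z j -` S j \<inter> space M)) =
       P.prob {\<omega> \<in> space M. Z 0 \<omega> = e} * P.prob {\<omega> \<in> space M. c1 < Z 1 \<omega>} * P.prob {\<omega> \<in> space M. c2 < Z 2 \<omega>}"
    proof -
      have e0: "Z 0 -` S 0 \<inter> space M = {\<omega> \<in> space M. Z 0 \<omega> = e}" by (auto simp: S_def)
      have e1: "Z 1 -` S 1 \<inter> space M = {\<omega> \<in> space M. c1 < Z 1 \<omega>}" by (auto simp: S_def)
      have e2: "Z 2 -` S 2 \<inter> space M = {\<omega> \<in> space M. c2 < Z 2 \<omega>}" by (auto simp: S_def)
      show ?thesis unfolding L_def using e0 e1 e2 by (simp add: mult.assoc)
    qed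
    ultimately show ?thesis by simp
  qed

  have Ev_set: "{\<omega> \<in> space M. Ev \<omega>} \<in> P.events"
  proof -
    have "{\<omega> \<in> space M. Ev \<omega>} = {\<omega> \<in> space M. Z 0 \<omega> = 1}" by (auto simp: Z_def)
    also have "\<dots> \<in> P.events" by measurable
    finally show ?thesis .
  qed
  have pE1: "P.prob {\<omega> \<in> space M. Z 0 \<omega> = 1} = Pe"
  proof -
    have "{\<omega> \<in> space M. Z 0 \<omega> = 1} = {\<omega> \<in> space M. Ev \<omega>}" by (auto simp: Z_def)
    then show ?thesis by (simp add: Pe_def)
  qed
  have pE0: "P.prob {\<omega> \<in> space M. Z 0 \<omega> = 0} = 1 - Pe"
  proof -
    have "{\<omega> \<in> space M. Z 0 \<omega> = 0} = space M - {\<omega> \<in> space M. Ev \<omega>}" by (auto simp: Z_def)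
    then show ?thesis using P.prob_compl[OF Ev_set] by (simp add: Pe_def)
  qed
  have pH1: "P.prob {\<omega> \<in> space M. c < Z 1 \<omega>} = exp (- c)" if "c \<ge> 0" for c
    using tails[of 1 c] that by (simp add: Z_def)
  have pH2: "P.prob {\<omega> \<in> space M. c < Z 2 \<omega>} = exp (- c)" if "c \<ge> 0" for c
    using tails[of 2 c] that by (simp add: Z_def)

  define S1 where "S1 = {\<omega> \<in> space M. Z 0 \<omega> = 1} \<inter> {\<omega> \<in> space M. A * lam1 < Z 1 \<omega>} \<inter> {\<omega> \<in> space M. \<zeta> * lam2 < Z 2 \<omega>}"
  define S0 where "S0 = {\<omega> \<in> space M. Z 0 \<omega> = 0} \<inter> {\<omega> \<in> space M. \<zeta> * lam1 < Z 1 \<omega>} \<inter> {\<omega> \<in> space M. A * lam2 < Z 2 \<omega>}"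
  have S0m: "S0 \<in> P.events" unfolding S0_def by measurable
  have S1m: "S1 \<in> P.events" unfolding S1_def by measurable
  have Sdisj: "S0 \<inter> S1 = {}" unfolding S0_def S1_def by auto
  have Seq: "{\<omega> \<in> space M.
      gain (h 1) d1 \<alpha> \<omega> * \<beta> / (gain (h 1) d1 \<alpha> \<omega> * (1 - \<beta>) + 1 / \<rho>) > \<epsilon>0 \<and>
      gain (h 2) d2 \<alpha> \<omega> * \<beta> / (gain (h 2) d2 \<alpha> \<omega> * (1 - \<beta>) + 1 / \<rho>) > \<epsilon>0 \<and>
      \<rho> * (1 - \<beta>) * (if Ev \<omega> then gain (h 2) d2 \<alpha> \<omega> else gain (h 1) d1 \<alpha> \<omega>) > \<epsilon>0} = S0 \<union> S1"
    unfolding cond_iff S0_def S1_def by (auto simp: Z_def)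
  have pS1: "P.prob S1 = Pe * (exp (- (A * lam1)) * exp (- (\<zeta> * lam2)))"
    unfolding S1_def prod3 pE1 using pH1[of "A * lam1"] pH2[of "\<zeta> * lam2"] A_pos zeta_pos lam1_pos lam2_pos
    by simp
  have pS0: "P.prob S0 = (1 - Pe) * (exp (- (\<zeta> * lam1)) * exp (- (A * lam2)))"
    unfolding S0_def prod3 pE0 using pH1[of "\<zeta> * lam1"] pH2[of "A * lam2"] A_pos zeta_pos lam1_pos lam2_pos
    by simp
  have goal: "1 - measure M {\<omega> \<in> space M.
      gain (h 1) d1 \<alpha> \<omega> * \<beta> / (gain (h 1) d1 \<alpha> \<omega> * (1 - \<beta>) + 1 / \<rho>) > \<epsilon>0 \<and>
      gain (h 2) d2 \<alpha> \<omega> * \<beta> / (gain (h 2) d2 \<alpha> \<omega> * (1 - \<beta>) + 1 / \<rho>) > \<epsilon>0 \<and>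
      \<rho> * (1 - \<beta>) * (if Ev \<omega> then gain (h 2) d2 \<alpha> \<omega> else gain (h 1) d1 \<alpha> \<omega>) > \<epsilon>0}
    = 1 - (1 - Pe) * exp (-(lam2 * A + lam1 * \<zeta>)) - Pe * exp (-(lam1 * A + lam2 * \<zeta>))"
  proof -
    have "measure M (S0 \<union> S1) = P.prob S0 + P.prob S1"
      by (rule P.finite_measure_Union[OF S0m S1m Sdisj])
    then show ?thesis unfolding Seq pS0 pS1
      by (simp add: exp_add[symmetric] algebra_simps)
  qed
  show ?thesis
    using goal unfolding Let_def \<epsilon>0_def d1_def d2_def lam1_def lam2_def A_def B_def \<zeta>_def Pe_def Ev_def
    by simp
qed

end
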